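(* Let $\mathcal{D}$ be a dyadic grid, $f\in L^2(\mathbb{R}^d)$ and $j\in\mathbb{N}_0$. For all $x\in\mathbb{R}^d$, \[ S_j^{\mathcal{D}}f(x)\le S_j^{3\mathcal{D}}f(x)\le 3^{d/2}S_j^{\mathcal{D}}f(x), \] where \[ \big(S_j^{\mathcal{D}}f(x)\big)^2=\sum_{Q\in\mathcal{D}}\sum_{\substack{P\in\mathcal{D},\,P\subset Q\\ \ell P=2^{-j}\ell Q}}\frac{\langle f,h_P\rangle^2}{|P|}\mathbf{1}_P(x),\qquad \big(S_j^{3\mathcal{D}}f(x)\big)^2=\sum_{R\in\mathcal{D}}\sum_{\substack{P\in\mathcal{D},\,P\subset 3R\\ \ell P=2^{-j}\ell R}}\frac{\langle f,h_P\rangle^2}{|P|}\mathbf{1}_P(x). \]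
   Context: A dyadic grid is the standard grid $\bigcup_j\{2^{-j}([0,1)^d+m):m\in\mathbb{Z}^d\}$ or a translate of it by $\omega\in(\{0,1\}^d)^{\mathbb{Z}}$. $3R$ is the cube concentric with $R$ of side $3\ell R$. For a dyadic cube $P=P_1\times\dots\times P_d$, the Haar functions are $h_P^\epsilon=\prod_ih_{P_i}^{\epsilon_i}$, $\epsilon\in\{0,1\}^d\setminus\{0\}^d$, where $h_I^0=|I|^{-1/2}\mathbf{1}_I$, $h_I^1=|I|^{-1/2}(\mathbf{1}_{I^-}-\mathbf{1}_{I^+})$; $\langle f,h_P\rangle^2:=\sum_\epsilon\langle f,h_P^\epsilon\rangle^2$. *)

theory Defs
  imports "HOL-Analysis.Analysis"
begin

text \<open>A dyadic cube is represented by the pair (corner a, side length s);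
  its point set is the half-open box [a, a + s)^d.\<close>

type_synonym 'n dcube = "(real^'n) \<times> real"

definition cube_set :: "'n::finite dcube \<Rightarrow> (real^'n) set" where
  "cube_set P = {x. \<forall>c. fst P $ c \<le> x $ c \<and> x $ c < fst P $ c + snd P}"

definition side :: "'n::finite dcube \<Rightarrow> real" where
  "side P = snd P"

definition vol :: "'n::finite dcube \<Rightarrow> real" where
  "vol P = snd P ^ CARD('n)"

definition triple :: "'n::finite dcube \<Rightarrow> 'n dcube" where
  "triple R = (fst R - (\<chi> c. snd R), 3 * snd R)"

definition grid_shift :: "(int \<Rightarrow> 'n::finite \<Rightarrow> bool) \<Rightarrow> int \<Rightarrow> real^'n" where
  "grid_shift \<omega> k = (\<chi> c. (\<Sum>n. 2 powr (- (real_of_int k + 1 + real n)) *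
        (if \<omega> (k + 1 + int n) c then 1 else 0)))"

definition dyadic_grid_of :: "(int \<Rightarrow> 'n::finite \<Rightarrow> bool) \<Rightarrow> 'n dcube set" where
  "dyadic_grid_of \<omega> = {((\<chi> c. 2 powr (- real_of_int k) * real_of_int (m c)) + grid_shift \<omega> k,
                          2 powr (- real_of_int k)) | k m. True}"

text \<open>Dyadic grids: the standard grid (omega = 0) or one of its translates.\<close>
definition is_dyadic_grid :: "'n::finite dcube set \<Rightarrow> bool" where
  "is_dyadic_grid D \<longleftrightarrow> (\<exists>\<omega>. D = dyadic_grid_of \<omega>)"

definition haar1 :: "real \<Rightarrow> real \<Rightarrow> bool \<Rightarrow> real \<Rightarrow> real" where
  "haar1 a s e t = (if e
     then s powr (-1/2) * (indicator {a..<a + s/2} t - indicator {a + s/2..<a + s} t)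
     else s powr (-1/2) * indicator {a..<a + s} t)"

definition haar :: "'n::finite dcube \<Rightarrow> ('n \<Rightarrow> bool) \<Rightarrow> real^'n \<Rightarrow> real" where
  "haar P \<epsilon> x = (\<Prod>c\<in>UNIV. haar1 (fst P $ c) (snd P) (\<epsilon> c) (x $ c))"

text \<open>\<langle>f,h_P\<rangle>^2 = sum over epsilon \<noteq> 0 of \<langle>f,h_P^epsilon\<rangle>^2.\<close>
definition haar_coeff_sq :: "(real^'n::finite \<Rightarrow> real) \<Rightarrow> 'n dcube \<Rightarrow> real" where
  "haar_coeff_sq f P = (\<Sum>\<epsilon>\<in>{\<epsilon>. \<epsilon> \<noteq> (\<lambda>_. False)}.
      (integral\<^sup>L lebesgue (\<lambda>x. f x * haar P \<epsilon> x))\<^sup>2)"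

definition term_P :: "(real^'n::finite \<Rightarrow> real) \<Rightarrow> 'n dcube \<Rightarrow> real^'n \<Rightarrow> ennreal" where
  "term_P f P x = ennreal (haar_coeff_sq f P / vol P * indicator (cube_set P) x)"

definition SD_sq :: "'n::finite dcube set \<Rightarrow> (real^'n \<Rightarrow> real) \<Rightarrow> nat \<Rightarrow> real^'n \<Rightarrow> ennreal" where
  "SD_sq D f j x = (\<Sum>\<^sub>\<infinity>Q\<in>D. \<Sum>\<^sub>\<infinity>P\<in>{P\<in>D. cube_set P \<subseteq> cube_set Q \<and> side P = 2 powr (- real j) * side Q}.
      term_P f P x)"

definition S3D_sq :: "'n::finite dcube set \<Rightarrow> (real^'n \<Rightarrow> real) \<Rightarrow> nat \<Rightarrow> real^'n \<Rightarrow> ennreal" where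
  "S3D_sq D f j x = (\<Sum>\<^sub>\<infinity>R\<in>D. \<Sum>\<^sub>\<infinity>P\<in>{P\<in>D. cube_set P \<subseteq> cube_set (triple R) \<and> side P = 2 powr (- real j) * side R}.
      term_P f P x)"

definition enn_sqrt :: "ennreal \<Rightarrow> ennreal" where
  "enn_sqrt t = (if t = top then top else ennreal (sqrt (enn2real t)))"

definition SD :: "'n::finite dcube set \<Rightarrow> (real^'n \<Rightarrow> real) \<Rightarrow> nat \<Rightarrow> real^'n \<Rightarrow> ennreal" where
  "SD D f j x = enn_sqrt (SD_sq D f j x)"

definition S3D :: "'n::finite dcube set \<Rightarrow> (real^'n \<Rightarrow> real) \<Rightarrow> nat \<Rightarrow> real^'n \<Rightarrow> ennreal" where
  "S3D D f j x = enn_sqrt (S3D_sq D f j x)"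

end

theory Submission
  imports Defs
begin

lemma enn_summ[simp]: "(f::_\<Rightarrow>ennreal) summable_on S"
  by (simp add: nonneg_summable_on_complete)

lemma enn_infsum_subset:
  fixes f :: "'a \<Rightarrow> ennreal"
  assumes "A \<subseteq> B"
  shows "infsum f A \<le> infsum f B"
  by (rule infsum_mono_neutral) (use assms in auto)

lemma enn_fin_Sigma:
  fixes g :: "'a \<Rightarrow> 'b \<Rightarrow> ennreal"
  assumes "finite H"
  shows "(\<Sum>x\<in>H. \<Sum>\<^sub>\<infinity>y\<in>Y x. g x y) = (\<Sum>\<^sub>\<infinity>(x,y)\<in>Sigma H Y. g x y)"
proof -
  have "((\<lambda>(x,y). g x y) has_sum (\<Sum>x\<in>H. \<Sum>\<^sub>\<infinity>y\<in>Y x. g x y)) (\<Union>x\<in>H. Pair x ` Y x)"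
  proof (rule sum_has_sum[OF assms])
    fix x assume "x \<in> H"
    have "((\<lambda>(x,y). g x y) \<circ> Pair x has_sum (\<Sum>\<^sub>\<infinity>y\<in>Y x. g x y)) (Y x)"
      by (simp add: o_def has_sum_infsum)
    then show "((\<lambda>(x,y). g x y) has_sum (\<Sum>\<^sub>\<infinity>y\<in>Y x. g x y)) (Pair x ` Y x)"
      by (subst has_sum_reindex) (auto intro: inj_onI)
  qed auto
  moreover have "(\<Union>x\<in>H. Pair x ` Y x) = Sigma H Y" by auto
  ultimately show ?thesis by (simp add: infsumI)
qed

lemma ennreal_fubini:
  fixes g :: "'a \<Rightarrow> 'b \<Rightarrow> ennreal"
  shows "(\<Sum>\<^sub>\<infinity>x\<in>X. \<Sum>\<^sub>\<infinity>y\<in>Y x. g x y) = (\<Sum>\<^sub>\<infinity>(x,y)\<in>Sigma X Y. g x y)"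
proof (rule antisym)
  show "(\<Sum>\<^sub>\<infinity>x\<in>X. \<Sum>\<^sub>\<infinity>y\<in>Y x. g x y) \<le> (\<Sum>\<^sub>\<infinity>(x,y)\<in>Sigma X Y. g x y)"
    unfolding nonneg_infsum_complete[of X "\<lambda>x. \<Sum>\<^sub>\<infinity>y\<in>Y x. g x y", simplified]
  proof (rule SUP_least, clarify)
    fix H assume H: "finite H" "H \<subseteq> X"
    have "(\<Sum>x\<in>H. \<Sum>\<^sub>\<infinity>y\<in>Y x. g x y) = (\<Sum>\<^sub>\<infinity>(x,y)\<in>Sigma H Y. g x y)"
      by (rule enn_fin_Sigma[OF H(1)])
    also have "\<dots> \<le> (\<Sum>\<^sub>\<infinity>(x,y)\<in>Sigma X Y. g x y)"
      by (rule enn_infsum_subset) (use H in auto)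
    finally show "(\<Sum>x\<in>H. \<Sum>\<^sub>\<infinity>y\<in>Y x. g x y) \<le> (\<Sum>\<^sub>\<infinity>(x,y)\<in>Sigma X Y. g x y)" .
  qed
  show "(\<Sum>\<^sub>\<infinity>(x,y)\<in>Sigma X Y. g x y) \<le> (\<Sum>\<^sub>\<infinity>x\<in>X. \<Sum>\<^sub>\<infinity>y\<in>Y x. g x y)"
    unfolding nonneg_infsum_complete[of "Sigma X Y" "\<lambda>(x,y). g x y", simplified]
  proof (rule SUP_least, clarify)
    fix F assume F: "finite F" "F \<subseteq> Sigma X Y"
    define H where "H = fst ` F"
    have H: "finite H" "H \<subseteq> X" using F by (auto simp: H_def)
    have "(\<Sum>p\<in>F. (\<lambda>(x,y). g x y) p) = (\<Sum>\<^sub>\<infinity>(x,y)\<in>F. g x y)"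
      using F by simp
    also have "\<dots> \<le> (\<Sum>\<^sub>\<infinity>(x,y)\<in>Sigma H Y. g x y)"
      by (rule enn_infsum_subset) (use F in \<open>force simp: H_def\<close>)
    also have "\<dots> = (\<Sum>x\<in>H. \<Sum>\<^sub>\<infinity>y\<in>Y x. g x y)"
      by (rule enn_fin_Sigma[OF H(1), symmetric])
    also have "\<dots> = (\<Sum>\<^sub>\<infinity>x\<in>H. \<Sum>\<^sub>\<infinity>y\<in>Y x. g x y)"
      using H by simp
    also have "\<dots> \<le> (\<Sum>\<^sub>\<infinity>x\<in>X. \<Sum>\<^sub>\<infinity>y\<in>Y x. g x y)"
      by (rule enn_infsum_subset[OF H(2)])
    finally show "(\<Sum>p\<in>F. (\<lambda>(x,y). g x y) p) \<le> (\<Sum>\<^sub>\<infinity>x\<in>X. \<Sum>\<^sub>\<infinity>y\<in>Y x. g x y)" .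
  qed
qed

lemma ennreal_swap:
  fixes g :: "'a \<Rightarrow> 'b \<Rightarrow> ennreal"
  shows "(\<Sum>\<^sub>\<infinity>x\<in>X. \<Sum>\<^sub>\<infinity>y\<in>Y. g x y) = (\<Sum>\<^sub>\<infinity>y\<in>Y. \<Sum>\<^sub>\<infinity>x\<in>X. g x y)"
proof -
  have h: "((\<lambda>(x,y). g x y) has_sum (\<Sum>\<^sub>\<infinity>(x,y)\<in>X \<times> Y. g x y)) (X \<times> Y)"
    by (rule has_sum_infsum) simp
  have "((\<lambda>(y,x). g x y) has_sum (\<Sum>\<^sub>\<infinity>(x,y)\<in>X \<times> Y. g x y)) (Y \<times> X)"
    using h has_sum_swap[where f="\<lambda>(x,y). g x y" and A=X and B=Y] by simp
  then have "(\<Sum>\<^sub>\<infinity>(x,y)\<in>X \<times> Y. g x y) = (\<Sum>\<^sub>\<infinity>(y,x)\<in>Y \<times> X. g x y)"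
    by (simp add: infsumI)
  then show ?thesis using ennreal_fubini[where X=X and Y="\<lambda>_. Y" and g=g] ennreal_fubini[where X=Y and Y="\<lambda>_. X" and g="\<lambda>y x. g x y"]
    by simp
qed

lemma summable_shift:
  "summable (\<lambda>n. 2 powr (- (real_of_int k + 1 + real n)) * (if b n then 1 else 0::real))"
proof (rule summable_comparison_test')
  show "summable (\<lambda>n. 2 powr (- (real_of_int k + 1)) * (1/2::real)^n)"
    by (intro summable_mult summable_geometric) simp
  fix n
  have "2 powr (- (real_of_int k + 1 + real n)) = 2 powr (- (real_of_int k + 1)) * 2 powr (- real n)"
    by (simp add: powr_add[symmetric])
  also have "2 powr (- real n) = (1/2::real)^n"
    by (simp add: powr_minus powr_realpow power_one_over inverse_eq_divide)
  finally show "norm (2 powr (- (real_of_int k + 1 + real n)) * (if b n then 1 else 0::real))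
      \<le> 2 powr (- (real_of_int k + 1)) * (1/2::real)^n"
    by simp
qed

lemma shift_step:
  "grid_shift \<omega> (k - 1) $ c = 2 powr (- real_of_int k) * (if \<omega> k c then 1 else 0) + grid_shift \<omega> k $ c"
proof -
  define f where "f n = 2 powr (- (real_of_int (k - 1) + 1 + real n)) * (if \<omega> (k - 1 + 1 + int n) c then 1 else 0::real)" for n
  have sf: "summable f" unfolding f_def by (rule summable_shift)
  have e1: "grid_shift \<omega> (k - 1) $ c = suminf f"
    unfolding grid_shift_def f_def by (simp only: vec_lambda_beta)
  have "(\<Sum>n. f (Suc n)) = suminf f - f 0" by (rule suminf_split_head[OF sf])
  moreover have "grid_shift \<omega> k $ c = (\<Sum>n. f (Suc n))"
    unfolding grid_shift_def f_def by (simp add: algebra_simps)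
  moreover have "f 0 = 2 powr (- real_of_int k) * (if \<omega> k c then 1 else 0)"
    unfolding f_def by simp
  ultimately show ?thesis
    using e1 by simp
qed


lemma grid_mem:
  "P \<in> dyadic_grid_of \<omega> \<longleftrightarrow> (\<exists>k m. P = ((\<chi> c. 2 powr (- real_of_int k) * real_of_int (m c)) + grid_shift \<omega> k,
                          2 powr (- real_of_int k)))"
  unfolding dyadic_grid_of_def by blast

lemma grid_pos: "P \<in> dyadic_grid_of \<omega> \<Longrightarrow> snd P > 0"
  unfolding grid_mem by auto

lemma box_sub:
  fixes a b :: "real^'n::finite"
  assumes "s > 0" "cube_set (a,s) \<subseteq> cube_set (b,t)"
  shows "b$c \<le> a$c \<and> a$c + s \<le> b$c + t"
proof
  have "a \<in> cube_set (a,s)" using assms(1) by (simp add: cube_set_def)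
  then have "a \<in> cube_set (b,t)" using assms(2) by blast
  then show "b$c \<le> a$c" by (simp add: cube_set_def)
  show "a$c + s \<le> b$c + t"
  proof (rule ccontr)
    assume nc: "\<not> a$c + s \<le> b$c + t"
    define y :: "real^'n" where "y = (\<chi> c'. if c' = c then max (a$c) (b$c + t) else a$c')"
    have "y \<in> cube_set (a,s)" using assms(1) nc by (auto simp: cube_set_def y_def)
    then have "y \<in> cube_set (b,t)" using assms(2) by blast
    then have "y$c < b$c + t" by (simp add: cube_set_def)
    then show False by (simp add: y_def)
  qed
qed

lemma box_sub_suff:
  fixes a b :: "real^'n::finite"
  assumes "\<And>c. b$c \<le> a$c \<and> a$c + s \<le> b$c + t"
  shows "cube_set (a,s) \<subseteq> cube_set (b,t)"
  unfolding cube_set_def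
proof (clarsimp)
  fix y :: "real^'n" and c
  assume "\<forall>c. a $ c \<le> y $ c \<and> y $ c < a $ c + s"
  then have "a $ c \<le> y $ c" "y $ c < a $ c + s" by auto
  with assms[of c] show "b $ c \<le> y $ c \<and> y $ c < b $ c + t" by linarith
qed

lemma grid_parent:
  assumes "P \<in> dyadic_grid_of \<omega>"
  shows "\<exists>Q\<in>dyadic_grid_of \<omega>. cube_set P \<subseteq> cube_set Q \<and> snd Q = 2 * snd P"
proof -
  obtain k m where P: "P = ((\<chi> c. 2 powr (- real_of_int k) * real_of_int (m c)) + grid_shift \<omega> k,
                          2 powr (- real_of_int k))"
    using assms unfolding grid_mem by blast
  define w where "w c = (if \<omega> k c then 1 else 0::int)" for c
  define m' where "m' c = (m c - w c) div 2" for c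
  define e where "e = (2::real) powr (- real_of_int k)"
  have e: "e > 0" by (simp add: e_def)
  have e2: "2 powr (- real_of_int (k - 1)) = 2 * e"
  proof -
    have "2 powr (- real_of_int (k - 1)) = 2 powr (- real_of_int k + 1)" by simp
    also have "\<dots> = e * 2" unfolding e_def by (simp only: powr_add powr_one)
    finally show ?thesis by simp
  qed
  define Q where "Q = ((\<chi> c. 2 powr (- real_of_int (k - 1)) * real_of_int (m' c)) + grid_shift \<omega> (k - 1),
                          2 powr (- real_of_int (k - 1)))"
  have QD: "Q \<in> dyadic_grid_of \<omega>" unfolding Q_def grid_mem by blast
  have sQ: "snd Q = 2 * snd P" unfolding Q_def P snd_conv e2 e_def ..
  have sub: "cube_set P \<subseteq> cube_set Q"
    unfolding P Q_def
  proof (rule box_sub_suff)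
    fix c
    have i1: "2 * m' c + w c \<le> m c" and i2: "m c \<le> 2 * m' c + w c + 1"
      unfolding m'_def by (auto simp: w_def)
    have r1: "real_of_int (2 * m' c + w c) \<le> real_of_int (m c)" using i1 by linarith
    have r2: "real_of_int (m c) \<le> real_of_int (2 * m' c + w c) + 1" using i2 by linarith
    have "e * real_of_int (2 * m' c + w c) \<le> e * real_of_int (m c)"
      using r1 e by (intro mult_left_mono) auto
    moreover have "e * real_of_int (m c) \<le> e * (real_of_int (2 * m' c + w c) + 1)"
      using r2 e by (intro mult_left_mono) auto
    moreover have "grid_shift \<omega> (k - 1) $ c = e * real_of_int (w c) + grid_shift \<omega> k $ c"
      unfolding shift_step e_def w_def by simp
    ultimately show "((\<chi> c. 2 powr (- real_of_int (k - 1)) * real_of_int (m' c)) + grid_shift \<omega> (k - 1)) $ c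
          \<le> ((\<chi> c. 2 powr - real_of_int k * real_of_int (m c)) + grid_shift \<omega> k) $ c \<and>
         ((\<chi> c. 2 powr - real_of_int k * real_of_int (m c)) + grid_shift \<omega> k) $ c + 2 powr - real_of_int k
          \<le> ((\<chi> c. 2 powr (- real_of_int (k - 1)) * real_of_int (m' c)) + grid_shift \<omega> (k - 1)) $ c +
             2 powr (- real_of_int (k - 1))"
      unfolding e2 by (simp add: e_def[symmetric] algebra_simps)
  qed
  show ?thesis using QD sQ sub by blast
qed

lemma grid_ancestor:
  assumes "P \<in> dyadic_grid_of \<omega>"
  shows "\<exists>Q\<in>dyadic_grid_of \<omega>. cube_set P \<subseteq> cube_set Q \<and> snd Q = 2 ^ j * snd P"
proof (induction j)
  case 0
  then show ?case using assms by auto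
next
  case (Suc j)
  then obtain Q where Q: "Q \<in> dyadic_grid_of \<omega>" "cube_set P \<subseteq> cube_set Q" "snd Q = 2 ^ j * snd P"
    by blast
  obtain Q' where Q': "Q' \<in> dyadic_grid_of \<omega>" "cube_set Q \<subseteq> cube_set Q'" "snd Q' = 2 * snd Q"
    using grid_parent[OF Q(1)] by blast
  show ?case using Q Q' by (intro bexI[of _ Q']) auto
qed

lemma grid_lattice:
  assumes "R \<in> dyadic_grid_of \<omega>" "Q \<in> dyadic_grid_of \<omega>" "snd R = snd Q"
  shows "\<exists>z. \<forall>c. fst R $ c = fst Q $ c + snd Q * real_of_int (z c)"
proof -
  obtain k m where R: "R = ((\<chi> c. 2 powr (- real_of_int k) * real_of_int (m c)) + grid_shift \<omega> k,
                          2 powr (- real_of_int k))"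
    using assms(1) unfolding grid_mem by blast
  obtain k' m' where Q: "Q = ((\<chi> c. 2 powr (- real_of_int k') * real_of_int (m' c)) + grid_shift \<omega> k',
                          2 powr (- real_of_int k'))"
    using assms(2) unfolding grid_mem by blast
  have "(2::real) powr (- real_of_int k) = 2 powr (- real_of_int k')" using assms(3) R Q by simp
  then have "k = k'" by (simp add: powr_inj)
  then show ?thesis
    by (intro exI[of _ "\<lambda>c. m c - m' c"]) (simp add: R Q algebra_simps)
qed


lemma grid_count:
  fixes P :: "'n::finite dcube" and j :: nat
  assumes PD: "P \<in> dyadic_grid_of \<omega>"
  defines "S \<equiv> {R\<in>dyadic_grid_of \<omega>. cube_set P \<subseteq> cube_set (triple R) \<and> side P = 2 powr (- real j) * side R}"
  shows "finite S \<and> card S \<le> 3 ^ CARD('n)"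
proof -
  obtain Q where Q: "Q \<in> dyadic_grid_of \<omega>" "cube_set P \<subseteq> cube_set Q" "snd Q = 2 ^ j * snd P"
    using grid_ancestor[OF PD] by blast
  define t where "t = snd Q"
  define s where "s = snd P"
  have s0: "s > 0" using grid_pos[OF PD] by (simp add: s_def)
  have t0: "t > 0" using grid_pos[OF Q(1)] by (simp add: t_def)
  define Z where "Z = PiE (UNIV::'n set) (\<lambda>_. {-1,0,1::int})"
  define \<phi> where "\<phi> z = (fst Q + (\<chi> c. t * real_of_int (z c)), t)" for z :: "'n \<Rightarrow> int"
  have finZ: "finite Z" unfolding Z_def by (intro finite_PiE) auto
  have cardZ: "card Z = 3 ^ CARD('n)" unfolding Z_def by (simp add: card_PiE numeral_3_eq_3)
  have SZ: "S \<subseteq> \<phi> ` Z"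
  proof
    fix R assume "R \<in> S"
    then have RD: "R \<in> dyadic_grid_of \<omega>" and R3: "cube_set P \<subseteq> cube_set (triple R)"
      and sR: "side P = 2 powr (- real j) * side R" by (auto simp: S_def)
    have "snd R = 2 ^ j * snd P"
      using sR by (simp add: side_def powr_minus powr_realpow field_simps)
    then have sRQ: "snd R = t" using Q(3) by (simp add: t_def)
    obtain z where z: "\<And>c. fst R $ c = fst Q $ c + t * real_of_int (z c)"
      using grid_lattice[OF RD Q(1)] sRQ t_def by auto
    have zc: "z c \<in> {-1,0,1}" for c
    proof -
      have PQ: "fst Q $ c \<le> fst P $ c \<and> fst P $ c + s \<le> fst Q $ c + t"
        using box_sub[of s "fst P" "fst Q" t c] Q(2) s0 by (simp add: s_def t_def)
      have "cube_set (fst P, s) \<subseteq> cube_set (fst R - (\<chi> c. t), 3 * t)"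
        using R3 sRQ by (simp add: s_def triple_def)
      then have PR: "(fst R - (\<chi> c. t)) $ c \<le> fst P $ c \<and> fst P $ c + s \<le> (fst R - (\<chi> c. t)) $ c + 3 * t"
        using box_sub[of s "fst P" _ "3 * t" c] s0 by blast
      have vc: "(fst R - (\<chi> c. t)) $ c = fst R $ c - t" by simp
      have "t * real_of_int (z c) < t * 2" using PQ PR z[of c] s0 vc by linarith
      then have a: "real_of_int (z c) < 2" using t0 by (simp add: mult_less_cancel_left_pos)
      have "t * (-2) < t * real_of_int (z c)" using PQ PR z[of c] s0 vc by linarith
      then have b: "-2 < real_of_int (z c)" using t0 mult_less_cancel_left_pos[of t "-2" "real_of_int (z c)"] by simp
      from a b have "z c < 2" "-2 < z c" by linarith+
      then show ?thesis by auto
    qed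
    have "z \<in> Z" unfolding Z_def using zc by (auto simp: PiE_def extensional_def)
    moreover have "R = \<phi> z"
      unfolding \<phi>_def using z sRQ by (simp add: prod_eq_iff vec_eq_iff)
    ultimately show "R \<in> \<phi> ` Z" by blast
  qed
  have finS: "finite S" using SZ finZ finite_subset by blast
  have "card S \<le> card (\<phi> ` Z)" using SZ finZ by (intro card_mono) auto
  also have "\<dots> \<le> card Z" using finZ by (rule card_image_le)
  finally show ?thesis using finS cardZ by simp
qed

lemma swap_cond:
  fixes h :: "'a \<Rightarrow> ennreal"
  shows "(\<Sum>\<^sub>\<infinity>R\<in>D. \<Sum>\<^sub>\<infinity>P\<in>{P\<in>D. r R P}. h P) = (\<Sum>\<^sub>\<infinity>P\<in>D. \<Sum>\<^sub>\<infinity>R\<in>{R\<in>D. r R P}. h P)"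
proof -
  have 1: "(\<Sum>\<^sub>\<infinity>P\<in>{P\<in>D. r R P}. h P) = (\<Sum>\<^sub>\<infinity>P\<in>D. if r R P then h P else 0)" for R
    by (rule infsum_cong_neutral) auto
  have 2: "(\<Sum>\<^sub>\<infinity>R\<in>{R\<in>D. r R P}. h P) = (\<Sum>\<^sub>\<infinity>R\<in>D. if r R P then h P else 0)" for P
    by (rule infsum_cong_neutral) auto
  show ?thesis unfolding 1 2 by (rule ennreal_swap)
qed

lemma enn_sqrt_mono:
  assumes "a \<le> b" shows "enn_sqrt a \<le> enn_sqrt b"
proof (cases "b = top")
  case True then show ?thesis by (simp add: enn_sqrt_def)
next
  case False
  then have "a \<noteq> top" using assms by (auto simp: top_unique)
  moreover have "enn2real a \<le> enn2real b" using assms False by (simp add: enn2real_mono top.not_eq_extremum)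
  ultimately show ?thesis using False by (simp add: enn_sqrt_def)
qed

lemma enn_sqrt_scale:
  fixes a b :: ennreal and d :: nat
  assumes "b \<le> 3 ^ d * a"
  shows "enn_sqrt b \<le> ennreal (3 powr (real d / 2)) * enn_sqrt a"
proof (cases "a = top")
  case True
  have "ennreal (3 powr (real d / 2)) > 0" by simp
  then show ?thesis using True by (simp add: enn_sqrt_def ennreal_mult_top)
next
  case False
  then obtain a' where a': "a = ennreal a'" "a' \<ge> 0" by (cases a) auto
  have e3: "(3::ennreal) ^ d = ennreal (3 ^ d)" by (metis ennreal_numeral ennreal_power zero_le_numeral)
  have "b \<le> ennreal (3 ^ d * a')" using assms a' by (simp add: ennreal_mult e3)
  then obtain b' where b': "b = ennreal b'" "b' \<ge> 0" "b' \<le> 3 ^ d * a'"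
    using a'(2) by (cases b) (auto simp: ennreal_le_iff top_unique)
  have "sqrt b' \<le> sqrt (3 ^ d * a')" using b' by simp
  also have "\<dots> = sqrt (3 ^ d) * sqrt a'" by (simp add: real_sqrt_mult)
  also have "sqrt ((3::real) ^ d) = 3 powr (real d / 2)"
    by (simp add: powr_half_sqrt[symmetric] powr_realpow[symmetric] powr_powr)
  finally have "sqrt b' \<le> 3 powr (real d / 2) * sqrt a'" .
  then have "ennreal (sqrt b') \<le> ennreal (3 powr (real d / 2) * sqrt a')" by (rule ennreal_leI)
  then show ?thesis using a' b' by (simp add: enn_sqrt_def ennreal_mult)
qed


lemma cube_sub_triple: "cube_set (Q::'n::finite dcube) \<subseteq> cube_set (triple Q)"
proof
  fix y assume "y \<in> cube_set Q"
  then have h: "fst Q $ c \<le> y $ c \<and> y $ c < fst Q $ c + snd Q" for c by (simp add: cube_set_def)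
  have "fst Q $ c - snd Q \<le> y $ c \<and> y $ c < fst Q $ c - snd Q + 3 * snd Q" for c
    using h[of c] by linarith
  then show "y \<in> cube_set (triple Q)" by (simp add: cube_set_def triple_def)
qed

lemma enn_infsum_cmult_le:
  fixes g :: "'a \<Rightarrow> ennreal"
  shows "(\<Sum>\<^sub>\<infinity>P\<in>A. c * g P) \<le> c * (\<Sum>\<^sub>\<infinity>P\<in>A. g P)"
  unfolding nonneg_infsum_complete[of A "\<lambda>P. c * g P", simplified]
proof (rule SUP_least, clarify)
  fix F assume F: "finite F" "F \<subseteq> A"
  have "(\<Sum>P\<in>F. c * g P) = c * (\<Sum>P\<in>F. g P)" by (simp add: sum_distrib_left)
  also have "(\<Sum>P\<in>F. g P) = (\<Sum>\<^sub>\<infinity>P\<in>F. g P)" using F by simp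
  also have "c * \<dots> \<le> c * (\<Sum>\<^sub>\<infinity>P\<in>A. g P)"
    by (intro mult_left_mono enn_infsum_subset F(2)) simp
  finally show "(\<Sum>P\<in>F. c * g P) \<le> c * (\<Sum>\<^sub>\<infinity>P\<in>A. g P)" .
qed

theorem proposition8p2:
  fixes D :: "'n::finite dcube set" and f :: "real^'n \<Rightarrow> real" and j :: nat and x :: "real^'n"
  assumes "is_dyadic_grid D"
    and "f \<in> borel_measurable lebesgue"
    and "integrable lebesgue (\<lambda>y. (f y)\<^sup>2)"
  shows "SD D f j x \<le> S3D D f j x \<and>
         S3D D f j x \<le> ennreal (3 powr (real CARD('n) / 2)) * SD D f j x"
proof -
  obtain \<omega> where D: "D = dyadic_grid_of \<omega>" using assms(1) unfolding is_dyadic_grid_def by blast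
  define T where "T P = term_P f P x" for P
  have part1: "SD_sq D f j x \<le> S3D_sq D f j x"
    unfolding SD_sq_def S3D_sq_def
  proof (rule infsum_mono)
    fix Q assume "Q \<in> D"
    show "(\<Sum>\<^sub>\<infinity>P\<in>{P\<in>D. cube_set P \<subseteq> cube_set Q \<and> side P = 2 powr (- real j) * side Q}. term_P f P x)
       \<le> (\<Sum>\<^sub>\<infinity>P\<in>{P\<in>D. cube_set P \<subseteq> cube_set (triple Q) \<and> side P = 2 powr (- real j) * side Q}. term_P f P x)"
      by (rule enn_infsum_subset) (use cube_sub_triple[of Q] in auto)
  qed auto
  have S3: "S3D_sq D f j x = (\<Sum>\<^sub>\<infinity>P\<in>D. \<Sum>\<^sub>\<infinity>R\<in>{R\<in>D. cube_set P \<subseteq> cube_set (triple R) \<and> side P = 2 powr (- real j) * side R}. T P)"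
    unfolding S3D_sq_def T_def
    by (rule swap_cond[where r = "\<lambda>R P. cube_set P \<subseteq> cube_set (triple R) \<and> side P = 2 powr (- real j) * side R"])
  have S1: "SD_sq D f j x = (\<Sum>\<^sub>\<infinity>P\<in>D. \<Sum>\<^sub>\<infinity>R\<in>{R\<in>D. cube_set P \<subseteq> cube_set R \<and> side P = 2 powr (- real j) * side R}. T P)"
    unfolding SD_sq_def T_def
    by (rule swap_cond[where r = "\<lambda>R P. cube_set P \<subseteq> cube_set R \<and> side P = 2 powr (- real j) * side R"])
  have "S3D_sq D f j x \<le> (\<Sum>\<^sub>\<infinity>P\<in>D. 3 ^ CARD('n) * T P)"
    unfolding S3
  proof (rule infsum_mono)
    fix P assume PD: "P \<in> D"
    define S where "S = {R\<in>D. cube_set P \<subseteq> cube_set (triple R) \<and> side P = 2 powr (- real j) * side R}"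
    have fc: "finite S \<and> card S \<le> 3 ^ CARD('n)"
      unfolding S_def D using grid_count[of P \<omega> j] PD D by simp
    have "(\<Sum>\<^sub>\<infinity>R\<in>S. T P) = of_nat (card S) * T P" using fc by simp
    also have "\<dots> \<le> of_nat (3 ^ CARD('n)) * T P"
    proof (rule mult_right_mono)
      show "of_nat (card S) \<le> (of_nat (3 ^ CARD('n)) :: ennreal)"
        using fc by (simp only: of_nat_le_iff)
    qed simp
    also have "\<dots> = 3 ^ CARD('n) * T P" by simp
    finally show "(\<Sum>\<^sub>\<infinity>R\<in>{R\<in>D. cube_set P \<subseteq> cube_set (triple R) \<and> side P = 2 powr (- real j) * side R}. T P)
       \<le> 3 ^ CARD('n) * T P" unfolding S_def .
  qed auto
  also have "\<dots> \<le> 3 ^ CARD('n) * (\<Sum>\<^sub>\<infinity>P\<in>D. T P)"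
    by (rule enn_infsum_cmult_le)
  also have "\<dots> \<le> 3 ^ CARD('n) * SD_sq D f j x"
  proof (rule mult_left_mono)
    show "(\<Sum>\<^sub>\<infinity>P\<in>D. T P) \<le> SD_sq D f j x"
      unfolding S1
    proof (rule infsum_mono)
      fix P assume PD: "P \<in> D"
      obtain Q where Q: "Q \<in> D" "cube_set P \<subseteq> cube_set Q" "snd Q = 2 ^ j * snd P"
        using grid_ancestor[of P \<omega> j] PD D by blast
      have "side P = 2 powr (- real j) * side Q"
        using Q(3) by (simp add: side_def powr_minus powr_realpow field_simps)
      then have "{Q} \<subseteq> {R\<in>D. cube_set P \<subseteq> cube_set R \<and> side P = 2 powr (- real j) * side R}"
        using Q by auto
      then have "(\<Sum>\<^sub>\<infinity>R\<in>{Q}. T P) \<le> (\<Sum>\<^sub>\<infinity>R\<in>{R\<in>D. cube_set P \<subseteq> cube_set R \<and> side P = 2 powr (- real j) * side R}. T P)"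
        by (rule enn_infsum_subset)
      then show "T P \<le> (\<Sum>\<^sub>\<infinity>R\<in>{R\<in>D. cube_set P \<subseteq> cube_set R \<and> side P = 2 powr (- real j) * side R}. T P)"
        by simp
    qed auto
  qed simp
  finally have part2: "S3D_sq D f j x \<le> 3 ^ CARD('n) * SD_sq D f j x" .
  show ?thesis
    unfolding SD_def S3D_def
    using enn_sqrt_mono[OF part1] enn_sqrt_scale[OF part2] by simp
qed

end
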